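(* Let $n\ge 1$, $\theta^*\in\mathbb{R}^n$, and let $\phi:\mathbb{R}_{\ge0}\to\mathbb{R}^n$ be piecewise continuous and persistently exciting: there exist $M>0$, $T>0$, $\delta>0$ with $|\phi(t)|\le M$ for all $t\ge0$ and $\int_t^{t+T}\phi(s)\phi^T(s)\,ds\ge \delta I_n$ for all $t\ge 0$. Let $\beta,\gamma,\mu>0$ with $\beta\ge 2\gamma/\mu$, and set $\mathcal{N}_t:=1+\mu\,\phi^T(t)\phi(t)$. Consider the system in $x=(\theta,\vartheta)\in\mathbb{R}^n\times\mathbb{R}^n$ $$\dot\theta=-\beta(\theta-\vartheta),\qquad \dot\vartheta=-\frac{\gamma}{\mathcal{N}_t}\,\phi(t)\phi^T(t)(\theta-\theta^* ).$$ Then the point $(\theta^*,\theta^* )$ is uniformly globally asymptotically stable for this system. *)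

theory Defs
  imports "HOL-Analysis.Analysis"
begin

definition piecewise_continuous :: "(real \<Rightarrow> 'a::real_normed_vector) \<Rightarrow> bool" where
  "piecewise_continuous \<phi> \<longleftrightarrow>
     (\<exists>S. (\<forall>b. finite (S \<inter> {0..b})) \<and>
          (\<forall>t \<in> {0..} - S. continuous (at t within {0..}) \<phi>) \<and>
          (\<forall>s \<in> S. (s > 0 \<longrightarrow> (\<exists>l. (\<phi> \<longlongrightarrow> l) (at_left s))) \<and>
                    (\<exists>l. (\<phi> \<longlongrightarrow> l) (at_right s))))"

definition outer :: "real ^ 'n \<Rightarrow> real ^ 'n ^ 'n" where
  "outer v = (\<chi> i j. v $ i * v $ j)"

definition mat_ge :: "real ^ 'n ^ 'n \<Rightarrow> real ^ 'n ^ 'n \<Rightarrow> bool" where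
  "mat_ge A B \<longleftrightarrow> (\<forall>v. v \<bullet> ((A - B) *v v) \<ge> 0)"

definition persistently_exciting :: "(real \<Rightarrow> real ^ 'n) \<Rightarrow> bool" where
  "persistently_exciting \<phi> \<longleftrightarrow>
     (\<exists>M T \<delta>. M > 0 \<and> T > 0 \<and> \<delta> > 0 \<and>
        (\<forall>t \<ge> 0. norm (\<phi> t) \<le> M) \<and>
        (\<forall>t \<ge> 0. mat_ge (integral {t..t+T} (\<lambda>s. outer (\<phi> s))) (\<delta> *\<^sub>R mat 1)))"

definition classK :: "(real \<Rightarrow> real) \<Rightarrow> bool" where
  "classK \<alpha> \<longleftrightarrow> continuous_on {0..} \<alpha> \<and> strict_mono_on {0..} \<alpha> \<and> \<alpha> 0 = 0"

definition classKL :: "(real \<Rightarrow> real \<Rightarrow> real) \<Rightarrow> bool" where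
  "classKL \<beta> \<longleftrightarrow> continuous_on ({0..} \<times> {0..}) (\<lambda>(r,s). \<beta> r s) \<and>
     (\<forall>s \<ge> 0. classK (\<lambda>r. \<beta> r s)) \<and>
     (\<forall>r \<ge> 0. antimono_on {0..} (\<lambda>s. \<beta> r s) \<and> ((\<lambda>s. \<beta> r s) \<longlongrightarrow> 0) at_top)"

definition is_solution :: "(real \<Rightarrow> 'a \<Rightarrow> 'a::euclidean_space) \<Rightarrow> real \<Rightarrow> (real \<Rightarrow> 'a) \<Rightarrow> bool" where
  "is_solution f t0 x \<longleftrightarrow>
     (\<forall>t \<ge> t0. ((\<lambda>s. f s (x s)) has_integral (x t - x t0)) {t0..t})"

definition UGAS :: "(real \<Rightarrow> 'a \<Rightarrow> 'a::euclidean_space) \<Rightarrow> 'a \<Rightarrow> bool" where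
  "UGAS f xe \<longleftrightarrow>
     (\<exists>\<beta>. classKL \<beta> \<and>
        (\<forall>t0 x. t0 \<ge> 0 \<longrightarrow> is_solution f t0 x \<longrightarrow>
           (\<forall>t \<ge> t0. norm (x t - xe) \<le> \<beta> (norm (x t0 - xe)) (t - t0))))"

definition estimator_sys ::
  "real \<Rightarrow> real \<Rightarrow> real \<Rightarrow> (real \<Rightarrow> real ^ 'n) \<Rightarrow> real ^ 'n
     \<Rightarrow> real \<Rightarrow> ((real ^ 'n) \<times> (real ^ 'n)) \<Rightarrow> ((real ^ 'n) \<times> (real ^ 'n))" where
  "estimator_sys \<beta> \<gamma> \<mu> \<phi> \<theta>s t z =
     (let \<theta> = fst z; \<eta> = snd z; N = 1 + \<mu> * (\<phi> t \<bullet> \<phi> t) in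
       (- \<beta> *\<^sub>R (\<theta> - \<eta>),
        - (\<gamma> / N) *\<^sub>R (outer (\<phi> t) *v (\<theta> - \<theta>s))))"

end

theory Submission
  imports Defs "HOL-Real_Asymp.Real_Asymp"
begin


lemma pc_integrable:
  fixes f :: "real \<Rightarrow> real"
  assumes F: "finite F" and c: "continuous_on ({a..b} - F) f" and bd: "\<And>s. s \<in> {a..b} \<Longrightarrow> \<bar>f s\<bar> \<le> B"
  shows "f integrable_on {a..b}"
proof -
  have neg: "negligible (({a..b} - F - {a..b}) \<union> ({a..b} - ({a..b} - F)))"
    by (rule negligible_subset[OF negligible_finite[OF F]]) auto
  have neg2: "negligible (({a..b} - ({a..b} - F)) \<union> (({a..b} - F) - {a..b}))"
    by (rule negligible_subset[OF negligible_finite[OF F]]) auto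
  have m: "{a..b} - F \<in> sets lebesgue"
    by (meson fmeasurableD lmeasurable_interval(1) lmeasurable_negligible_symdiff neg2)
  have "(\<lambda>_. B) integrable_on {a..b}" by (intro integrable_continuous_interval continuous_intros)
  then have "(\<lambda>_. B) integrable_on ({a..b} - F)" by (rule integrable_spike_set_eq[OF neg2, THEN iffD1])
  then have "f integrable_on ({a..b} - F)"
    by (rule measurable_bounded_by_integrable_imp_integrable_real[OF continuous_imp_measurable_on_sets_lebesgue[OF c m]])
      (use bd m in auto)
  then show ?thesis by (rule integrable_spike_set_eq[OF neg, THEN iffD1])
qed

lemma outer_mult: "outer v *v u = (v \<bullet> u) *\<^sub>R v"
  by (simp add: outer_def vec_eq_iff matrix_vector_mult_def inner_vec_def sum_distrib_left sum_distrib_right mult.commute mult.left_commute)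

lemma outer_quad: "u \<bullet> (outer v *v u) = (v \<bullet> u)^2"
  by (simp add: outer_mult power2_eq_square inner_commute)

lemma mat_ge_delta:
  fixes A :: "real^'n^'n"
  assumes "mat_ge A (d *\<^sub>R mat 1)" shows "d * (v \<bullet> v) \<le> v \<bullet> (A *v v)"
proof -
  have "(A - d *\<^sub>R mat 1) *v v = A *v v - d *\<^sub>R v"
    by (simp add: matrix_vector_mult_diff_rdistrib scaleR_matrix_vector_assoc[symmetric])
  then show ?thesis using assms unfolding mat_ge_def
    by (metis diff_ge_0_iff_ge inner_diff_right inner_scaleR_right)
qed

lemma bounded_comp:
  fixes H :: "'a::euclidean_space \<times> 'b::euclidean_space \<Rightarrow> real"
  assumes "continuous_on UNIV H"
  shows "\<exists>B. \<forall>p q. norm p \<le> M \<longrightarrow> norm q \<le> Bx \<longrightarrow> \<bar>H (p,q)\<bar> \<le> B"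
proof -
  have "compact (H ` (cball 0 M \<times> cball 0 Bx))"
    by (intro compact_continuous_image continuous_on_subset[OF assms] compact_Times) auto
  then obtain B where "\<forall>y \<in> H ` (cball 0 M \<times> cball 0 Bx). norm y \<le> B"
    using compact_imp_bounded bounded_iff by metis
  then show ?thesis by (intro exI[of _ B]) auto
qed


lemma quad_linear: "bounded_linear (\<lambda>A::real^'n^'n. v \<bullet> (A *v v))"
proof -
  have "linear (\<lambda>A::real^'n^'n. v \<bullet> (A *v v))"
    by (rule linearI) (simp_all add: matrix_vector_mult_add_rdistrib inner_add_right
        scaleR_matrix_vector_assoc[symmetric])
  then show ?thesis by (simp add: linear_conv_bounded_linear)
qed

locale est =
  fixes \<phi> :: "real \<Rightarrow> real^'n" and \<theta>s :: "real^'n" and \<beta> \<gamma> \<mu> M T \<delta> :: real and S :: "real set"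
  assumes \<beta>: "\<beta> > 0" and \<gamma>: "\<gamma> > 0" and \<mu>: "\<mu> > 0" and \<beta>ge: "2*\<gamma>/\<mu> \<le> \<beta>"
    and M: "M > 0" and T: "T > 0" and \<delta>: "\<delta> > 0" and bnd: "\<And>t. t \<ge> 0 \<Longrightarrow> norm (\<phi> t) \<le> M"
    and pe: "\<And>t. t \<ge> 0 \<Longrightarrow> mat_ge (integral {t..t+T} (\<lambda>s. outer (\<phi> s))) (\<delta> *\<^sub>R mat 1)"
    and finS: "\<And>b. finite (S \<inter> {0..b})"
    and cont\<phi>: "\<And>t. t \<ge> 0 \<Longrightarrow> t \<notin> S \<Longrightarrow> continuous (at t within {0..}) \<phi>"
begin

lemma outer_int: assumes "t \<ge> 0" shows "(\<lambda>s. outer (\<phi> s)) integrable_on {t..t+T}"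
proof (rule ccontr)
  assume "\<not> ?thesis"
  then have "integral {t..t+T} (\<lambda>s. outer (\<phi> s)) = 0" by (rule not_integrable_integral)
  then have "mat_ge 0 (\<delta> *\<^sub>R mat 1 :: real^'n^'n)" using pe[OF assms] by simp
  from mat_ge_delta[OF this, of "axis undefined 1"] show False using \<delta> by simp
qed

lemma pe_quad:
  assumes "t \<ge> 0"
  shows "(\<lambda>s. (\<phi> s \<bullet> v)^2) integrable_on {t..t+T}"
    and "\<delta> * (v \<bullet> v) \<le> integral {t..t+T} (\<lambda>s. (\<phi> s \<bullet> v)^2)"
proof -
  have eq: "(\<lambda>s. (\<phi> s \<bullet> v)^2) = (\<lambda>A. v \<bullet> (A *v v)) \<circ> (\<lambda>s. outer (\<phi> s))"
    by (simp add: o_def outer_quad)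
  show "(\<lambda>s. (\<phi> s \<bullet> v)^2) integrable_on {t..t+T}"
    unfolding eq by (rule integrable_linear[OF outer_int[OF assms] quad_linear])
  show "\<delta> * (v \<bullet> v) \<le> integral {t..t+T} (\<lambda>s. (\<phi> s \<bullet> v)^2)"
    unfolding eq integral_linear[OF outer_int[OF assms] quad_linear]
    using mat_ge_delta[OF pe[OF assms]] by simp
qed

lemma cont_on: assumes "0 \<le> a" shows "continuous_on ({a..b} - S \<inter> {0..b}) \<phi>"
proof -
  have "continuous (at s within ({a..b} - S \<inter> {0..b})) \<phi>" if "s \<in> {a..b} - S \<inter> {0..b}" for s
    using cont\<phi>[of s] that assms by (auto intro: continuous_within_subset)
  then show ?thesis unfolding continuous_on_eq_continuous_within by blast
qed

end

lemma N_pos: "\<mu> > 0 \<Longrightarrow> 1 + \<mu> * (v \<bullet> v) > (0::real)"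
  by (simp add: add_pos_nonneg)

context est begin
definition "c = min \<beta> (2*\<gamma>/(1+\<mu>*M^2))"
lemma c_pos: "c > 0" using \<beta> \<gamma> \<mu> unfolding c_def by (simp add: add_pos_nonneg)
end

locale sol = est +
  fixes t0 :: real and x :: "real \<Rightarrow> ((real^'n) \<times> (real^'n))"
  assumes t0: "t0 \<ge> 0" and sol: "is_solution (estimator_sys \<beta> \<gamma> \<mu> \<phi> \<theta>s) t0 x"
begin

definition "G s = estimator_sys \<beta> \<gamma> \<mu> \<phi> \<theta>s s (x s)"
definition "z s = snd (x s) - \<theta>s"
definition "e s = fst (x s) - \<theta>s"
definition "w s = fst (x s) - snd (x s)"
definition "zd s = (-(\<gamma>/(1+\<mu>*(\<phi> s \<bullet> \<phi> s))) * (\<phi> s \<bullet> e s)) *\<^sub>R \<phi> s"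
definition "wd s = -\<beta> *\<^sub>R w s - zd s"
definition "V s = z s \<bullet> z s + w s \<bullet> w s"
definition "Vd s = 2*(z s \<bullet> zd s) + 2*(w s \<bullet> wd s)"
definition "h s = w s \<bullet> w s + (\<phi> s \<bullet> z s)^2"

lemma N_ne: "1 + \<mu> * (v \<bullet> v) \<noteq> 0"
  using N_pos[OF \<mu>, of v] by linarith

lemma G_eq: "G s = (wd s + zd s, zd s)"
  unfolding G_def estimator_sys_def Let_def wd_def zd_def w_def e_def
  by (simp add: outer_mult)

lemma G_fun': "G = (\<lambda>s. estimator_sys \<beta> \<gamma> \<mu> \<phi> \<theta>s s (x s))"
  by (simp add: fun_eq_iff G_def)

lemma G_int: "t \<ge> t0 \<Longrightarrow> (G has_integral (x t - x t0)) {t0..t}"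
  using sol unfolding is_solution_def G_fun' by blast

lemma x_eq: "t \<ge> t0 \<Longrightarrow> x t = x t0 + integral {t0..t} G"
proof -
  assume "t \<ge> t0"
  then have "integral {t0..t} G = x t - x t0" by (rule integral_unique[OF G_int])
  then show ?thesis by simp
qed

lemma x_cont: "continuous_on {t0..b} x"
proof (cases "t0 \<le> b")
  case True
  then have "G integrable_on {t0..b}" by (rule has_integral_integrable[OF G_int])
  then have "continuous_on {t0..b} (\<lambda>u. x t0 + integral {t0..u} G)"
    by (intro continuous_intros indefinite_integral_continuous_1)
  then show ?thesis by (rule continuous_on_eq) (metis atLeastAtMost_iff x_eq)
qed simp

lemma G_fun: "G = (\<lambda>s. (wd s + zd s, zd s))" by (simp add: fun_eq_iff G_eq)

lemma G_cont: assumes "t0 \<le> s" "s \<notin> S" "s \<le> b" shows "continuous (at s within {t0..b}) G"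
proof -
  have pc: "continuous (at s within {t0..b}) \<phi>"
    using assms t0 by (intro continuous_within_subset[OF cont\<phi>]) auto
  have xc: "continuous (at s within {t0..b}) x"
    using x_cont[of b] assms by (simp add: continuous_on_eq_continuous_within)
  show ?thesis unfolding G_fun wd_def zd_def w_def e_def
    by (intro continuous_intros pc xc) (simp_all add: N_ne)
qed

lemma x_deriv: assumes "t0 < s" "s \<notin> S" shows "(x has_vector_derivative G s) (at s)"
proof -
  define b where "b = s + 1"
  have Gi: "G integrable_on {t0..b}" using assms b_def by (intro has_integral_integrable[OF G_int]) auto
  have d1: "((\<lambda>u. integral {t0..u} G) has_vector_derivative G s) (at s within {t0..b})"
    using integral_has_vector_derivative_continuous_at[OF Gi, of s "{}"] G_cont[of s b] assms b_def by simp
  have d2: "((\<lambda>u. x t0 + integral {t0..u} G) has_vector_derivative G s) (at s within {t0..b})"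
    using has_vector_derivative_add[OF has_vector_derivative_const d1] by simp
  have d3: "(x has_vector_derivative G s) (at s within {t0..b})"
  proof (rule has_vector_derivative_transform_within[OF d2, of 1])
    show "x t0 + integral {t0..u} G = x u" if "u \<in> {t0..b}" for u
      using that x_eq[of u] by simp
  qed (use assms b_def in auto)
  have "at s within {t0..b} = at s" using assms b_def by (intro at_within_interior) auto
  then show ?thesis using d3 by simp
qed

lemma z_fun: "z = (\<lambda>u. snd (x u) - \<theta>s)" by (simp add: fun_eq_iff z_def)
lemma w_fun: "w = (\<lambda>u. fst (x u) - snd (x u))" by (simp add: fun_eq_iff w_def)
lemma V_fun: "V = (\<lambda>u. z u \<bullet> z u + w u \<bullet> w u)" by (simp add: fun_eq_iff V_def)

lemma zw_deriv: assumes "t0 < s" "s \<notin> S"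
  shows "(z has_derivative (\<lambda>h. h *\<^sub>R zd s)) (at s)" "(w has_derivative (\<lambda>h. h *\<^sub>R wd s)) (at s)"
proof -
  have xd: "(x has_derivative (\<lambda>h. h *\<^sub>R G s)) (at s)"
    using x_deriv[OF assms] by (simp add: has_vector_derivative_def)
  show "(z has_derivative (\<lambda>h. h *\<^sub>R zd s)) (at s)" unfolding z_fun
    by (rule has_derivative_eq_rhs[OF has_derivative_diff[OF has_derivative_snd[OF xd] has_derivative_const]])
      (simp add: G_eq fun_eq_iff)
  show "(w has_derivative (\<lambda>h. h *\<^sub>R wd s)) (at s)" unfolding w_fun
    by (rule has_derivative_eq_rhs[OF has_derivative_diff[OF has_derivative_fst[OF xd] has_derivative_snd[OF xd]]])
      (simp add: G_eq fun_eq_iff algebra_simps)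
qed

lemma V_deriv: assumes "t0 < s" "s \<notin> S" shows "(V has_vector_derivative Vd s) (at s)"
  unfolding has_vector_derivative_def V_fun
  by (rule has_derivative_eq_rhs[OF has_derivative_add[OF
       has_derivative_inner[OF zw_deriv(1)[OF assms] zw_deriv(1)[OF assms]]
       has_derivative_inner[OF zw_deriv(2)[OF assms] zw_deriv(2)[OF assms]]]])
     (simp add: fun_eq_iff Vd_def inner_commute algebra_simps)

lemma z_deriv: assumes "t0 < s" "s \<notin> S" shows "(z has_vector_derivative zd s) (at s)"
  using zw_deriv[OF assms] by (simp add: has_vector_derivative_def)

lemma zwV_cont: "continuous_on {t0..b} z" "continuous_on {t0..b} w" "continuous_on {t0..b} V"
  unfolding V_fun z_fun w_fun by (intro continuous_intros x_cont)+

lemma V_ftc: assumes "t0 \<le> a" "a \<le> b" shows "(Vd has_integral (V b - V a)) {a..b}"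
proof (rule fundamental_theorem_of_calculus_interior_strong[of "S \<inter> {0..b}"])
  show "finite (S \<inter> {0..b})" by (rule finS)
  show "(V has_vector_derivative Vd s) (at s)" if "s \<in> {a<..<b} - S \<inter> {0..b}" for s
    using that assms t0 by (intro V_deriv) auto
  show "continuous_on {a..b} V" by (rule continuous_on_subset[OF zwV_cont(3)[of b]]) (use assms in auto)
qed (use assms in auto)

lemma z_ftc: assumes "t0 \<le> a" "a \<le> b" shows "(zd has_integral (z b - z a)) {a..b}"
proof (rule fundamental_theorem_of_calculus_interior_strong[of "S \<inter> {0..b}"])
  show "finite (S \<inter> {0..b})" by (rule finS)
  show "(z has_vector_derivative zd s) (at s)" if "s \<in> {a<..<b} - S \<inter> {0..b}" for s
    using that assms t0 by (intro z_deriv) auto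
  show "continuous_on {a..b} z" by (rule continuous_on_subset[OF zwV_cont(1)[of b]]) (use assms in auto)
qed (use assms in auto)

lemma int_comp:
  fixes H :: "(real^'n) \<times> ((real^'n) \<times> (real^'n)) \<Rightarrow> real"
  assumes H: "continuous_on UNIV H" and a: "t0 \<le> a"
  shows "(\<lambda>s. H (\<phi> s, x s)) integrable_on {a..b}"
proof (cases "a \<le> b")
  case True
  obtain Bx where Bx: "\<And>s. s \<in> {t0..b} \<Longrightarrow> norm (x s) \<le> Bx"
    using compact_imp_bounded[OF compact_continuous_image[OF x_cont compact_Icc]] bounded_iff
    by (metis image_eqI)
  obtain B where B: "\<And>p q. norm p \<le> M \<Longrightarrow> norm q \<le> Bx \<Longrightarrow> \<bar>H (p,q)\<bar> \<le> B"
    using bounded_comp[OF H, of M Bx] by blast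
  show ?thesis
  proof (rule pc_integrable[of "S \<inter> {0..b}"])
    show "finite (S \<inter> {0..b})" by (rule finS)
    have "continuous_on ({a..b} - S \<inter> {0..b}) (\<lambda>s. (\<phi> s, x s))"
    proof (intro continuous_intros)
      show "continuous_on ({a..b} - S \<inter> {0..b}) \<phi>" using cont_on[of a b] a t0 by simp
      show "continuous_on ({a..b} - S \<inter> {0..b}) x"
        by (rule continuous_on_subset[OF x_cont[of b]]) (use a in auto)
    qed
    then show "continuous_on ({a..b} - S \<inter> {0..b}) (\<lambda>s. H (\<phi> s, x s))"
      by (rule continuous_on_compose2[OF H]) auto
    show "\<bar>H (\<phi> s, x s)\<bar> \<le> B" if "s \<in> {a..b}" for s
      using that a t0 by (intro B bnd Bx) auto
  qed
qed (simp add: integrable_on_empty)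

end



lemma CS_int:
  fixes f :: "real \<Rightarrow> real"
  assumes f: "f integrable_on {a..b}" and f2: "(\<lambda>s. (f s)^2) integrable_on {a..b}" and ab: "a \<le> b"
  shows "(integral {a..b} f)^2 \<le> (b - a) * integral {a..b} (\<lambda>s. (f s)^2)"
proof (cases "a = b")
  case True
  then show ?thesis by simp
next
  case False
  define F1 where "F1 = integral {a..b} f"
  define F2 where "F2 = integral {a..b} (\<lambda>s. (f s)^2)"
  define d where "d = b - a"
  define r where "r = F1 / d"
  have ba: "d > 0" using ab False d_def by simp
  have "((\<lambda>s. (f s)^2 - 2*r * f s + r^2) has_integral (F2 - 2*r*F1 + (b-a)*r^2)) {a..b}"
    unfolding F1_def F2_def
    using has_integral_add[OF has_integral_diff[OF integrable_integral[OF f2] has_integral_mult_right[OF integrable_integral[OF f], of "2*r"]]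
        has_integral_const_real[of "r^2" a b]] ab by simp
  moreover have "\<And>s. 0 \<le> (f s)^2 - 2*r * f s + r^2"
  proof -
    fix s have "(f s)^2 - 2*r * f s + r^2 = (f s - r)^2" by (simp add: power2_eq_square algebra_simps)
    then show "0 \<le> (f s)^2 - 2*r * f s + r^2" by simp
  qed
  ultimately have "0 \<le> F2 - 2*r*F1 + (b-a)*r^2" by (rule has_integral_nonneg)
  also have "\<dots> = F2 - F1^2/d" unfolding r_def d_def[symmetric] using ba by (simp add: field_simps power2_eq_square)
  finally have "F1^2/d \<le> F2" by simp
  then have "F1^2 \<le> d * F2" using ba by (simp add: field_simps)
  then show ?thesis unfolding F1_def[symmetric] F2_def[symmetric] d_def .
qed

lemma sq_split: "(u::'a::real_inner) \<bullet> u \<le> 2*(v \<bullet> v) + 2*((u - v) \<bullet> (u - v))"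
proof -
  have "2*(v \<bullet> v) + 2*((u - v) \<bullet> (u - v)) - u \<bullet> u = (2 *\<^sub>R v - u) \<bullet> (2 *\<^sub>R v - u)"
    by (simp add: inner_diff_left inner_diff_right inner_commute algebra_simps)
  then show ?thesis by (metis diff_ge_0_iff_ge inner_ge_zero)
qed

lemma sq_split_real: "((a::real) + b)^2 \<le> 2*a^2 + 2*b^2"
proof -
  have "2*a^2 + 2*b^2 - (a+b)^2 = (a - b)^2" by (simp add: power2_eq_square algebra_simps)
  then show ?thesis by (metis diff_ge_0_iff_ge zero_le_power2)
qed

context est begin
definition "C2 = 2*\<gamma>^2*M^2*(1+M^2)"
definition "K = 2*T*(2+2*M^2*T^2*C2)/\<delta> + 2*T^2*C2 + 1"
lemma C2_pos: "C2 \<ge> 0" unfolding C2_def by simp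
lemma K_pos: "K > 0" unfolding K_def using T \<delta> C2_pos by (simp add: add_pos_nonneg)
end

context sol begin

lemma e_eq: "e s = w s + z s" by (simp add: e_def w_def z_def)

lemma pp_le: "s \<ge> 0 \<Longrightarrow> \<phi> s \<bullet> \<phi> s \<le> M^2"
  using bnd[of s] by (metis norm_ge_zero power2_norm_eq_inner power_mono)

lemma h_nonneg: "h s \<ge> 0" unfolding h_def by simp

lemma Vd_le: assumes s: "s \<ge> 0" shows "Vd s \<le> - c * h s"
proof -
  define p W Z where "p = \<phi> s" "W = w s" "Z = z s"
  define q where "q = \<gamma> / (1 + \<mu> * (p \<bullet> p))"
  define a b where "a = p \<bullet> Z" "b = p \<bullet> W"
  define WW where "WW = W \<bullet> W"
  have pp0: "p \<bullet> p \<ge> 0" by simp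
  have ppM: "p \<bullet> p \<le> M^2" unfolding p_W_Z_def using pp_le[OF s] .
  have N1: "1 + \<mu> * (p \<bullet> p) \<ge> 1" using \<mu> pp0 by simp
  have q0: "q > 0" unfolding q_def using \<gamma> N1 by simp
  have zd: "zd s = (-(q*(b + a))) *\<^sub>R p"
    unfolding zd_def q_def a_b_def p_W_Z_def e_eq by (simp add: inner_add_right)
  have Vd: "Vd s = -2*\<beta>*WW + 2*q*(b^2 - a^2)"
    unfolding Vd_def wd_def zd WW_def a_b_def p_W_Z_def[symmetric]
    by (simp add: inner_diff_right power2_eq_square algebra_simps inner_commute)
  have b2: "b^2 \<le> (p \<bullet> p) * WW" unfolding a_b_def WW_def by (rule Cauchy_Schwarz_ineq)
  have fr: "\<mu>*(p \<bullet> p)/(1+\<mu>*(p \<bullet> p)) \<le> 1" using N1 by (simp add: divide_le_eq)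
  have "q * (p \<bullet> p) = (\<gamma>/\<mu>) * (\<mu>*(p \<bullet> p)/(1+\<mu>*(p \<bullet> p)))"
    unfolding q_def using \<mu> by simp
  also have "\<dots> \<le> (\<gamma>/\<mu>) * 1" using fr \<gamma> \<mu> by (intro mult_left_mono) auto
  finally have qpp: "q * (p \<bullet> p) \<le> \<gamma>/\<mu>" by simp
  have WW0: "WW \<ge> 0" unfolding WW_def by simp
  have "q * b^2 \<le> q * ((p \<bullet> p) * WW)" using b2 q0 by (simp add: mult_left_mono)
  also have "\<dots> = (q * (p \<bullet> p)) * WW" by simp
  also have "\<dots> \<le> (\<gamma>/\<mu>) * WW" using qpp WW0 by (rule mult_right_mono)
  finally have qb: "q * b^2 \<le> (\<gamma>/\<mu>) * WW" .
  have qge: "\<gamma>/(1+\<mu>*M^2) \<le> q" unfolding q_def using \<gamma> \<mu> N1 ppM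
    by (intro divide_left_mono) (auto intro!: mult_pos_pos simp: add_pos_nonneg)
  have qa: "\<gamma>/(1+\<mu>*M^2) * a^2 \<le> q * a^2" using qge by (rule mult_right_mono) simp
  have bW0: "(2*\<gamma>/\<mu>) * WW \<le> \<beta> * WW" using \<beta>ge WW0 by (rule mult_right_mono)
  have bW: "2*((\<gamma>/\<mu>) * WW) \<le> \<beta> * WW" using bW0 by simp
  have c1: "c * WW \<le> \<beta> * WW" unfolding c_def using WW0 by (simp add: mult_right_mono)
  have c20: "c * a^2 \<le> (2*\<gamma>/(1+\<mu>*M^2)) * a^2" unfolding c_def by (rule mult_right_mono) auto
  have c2: "c * a^2 \<le> 2*((\<gamma>/(1+\<mu>*M^2)) * a^2)" using c20 by simp
  have e1: "-2*\<beta>*WW + 2*q*(b^2 - a^2) = -2*(\<beta>*WW) + 2*(q*b^2) - 2*(q*a^2)" by (simp add: algebra_simps)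
  have e2: "-c*(WW+a^2) = -(c*WW) - c*a^2" by (simp add: algebra_simps)
  have h: "h s = WW + a^2" unfolding h_def WW_def a_b_def p_W_Z_def ..
  show ?thesis unfolding Vd h e1 e2 using qb qa bW c1 c2 by linarith
qed


lemma zd_sq: assumes s: "s \<ge> 0" shows "zd s \<bullet> zd s \<le> C2 * h s"
proof -
  define p W Z where "p = \<phi> s" "W = w s" "Z = z s"
  define q where "q = \<gamma> / (1 + \<mu> * (p \<bullet> p))"
  define a b where "a = p \<bullet> Z" "b = p \<bullet> W"
  define WW where "WW = W \<bullet> W"
  have pp0: "p \<bullet> p \<ge> 0" by simp
  have ppM: "p \<bullet> p \<le> M^2" unfolding p_W_Z_def using pp_le[OF s] .
  have N1: "1 + \<mu> * (p \<bullet> p) \<ge> 1" using \<mu> pp0 by simp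
  have q0: "q \<ge> 0" unfolding q_def using \<gamma> N1 by simp
  have qg: "q \<le> \<gamma>" unfolding q_def using \<gamma> N1 by (simp add: divide_le_eq)
  have q2: "q^2 \<le> \<gamma>^2" by (rule power_mono[OF qg q0])
  have zd: "zd s = (-(q*(b + a))) *\<^sub>R p"
    unfolding zd_def q_def a_b_def p_W_Z_def e_eq by (simp add: inner_add_right)
  have zz: "zd s \<bullet> zd s = q^2 * (b + a)^2 * (p \<bullet> p)"
    unfolding zd by (simp add: power2_eq_square algebra_simps)
  have WW0: "WW \<ge> 0" unfolding WW_def by simp
  have b2: "b^2 \<le> (p \<bullet> p) * WW" unfolding a_b_def WW_def by (rule Cauchy_Schwarz_ineq)
  have "b^2 \<le> M^2 * WW" using b2 mult_right_mono[OF ppM WW0] by linarith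
  then have ab: "(b + a)^2 \<le> 2*a^2 + 2*(M^2*WW)" using sq_split_real[of b a] by linarith
  have "zd s \<bullet> zd s \<le> \<gamma>^2 * (2*a^2 + 2*(M^2*WW)) * M^2"
    unfolding zz using WW0 by (intro mult_mono q2 ab ppM) auto
  also have "\<dots> = 2*\<gamma>^2*M^2 * (a^2 + M^2*WW)" by (simp add: algebra_simps)
  also have "\<dots> \<le> 2*\<gamma>^2*M^2 * ((1+M^2)*(WW + a^2))"
  proof (rule mult_left_mono)
    have "a^2 \<le> (1+M^2)*a^2" by (simp add: algebra_simps)
    moreover have "M^2*WW \<le> (1+M^2)*WW" using WW0 by (simp add: algebra_simps)
    ultimately show "a^2 + M^2*WW \<le> (1+M^2)*(WW + a^2)" by (simp add: algebra_simps)
  qed simp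
  also have "\<dots> = C2 * h s" unfolding C2_def h_def WW_def a_b_def p_W_Z_def by (simp add: algebra_simps)
  finally show ?thesis .
qed

lemma h_int: assumes "t0 \<le> a" shows "h integrable_on {a..b}"
proof -
  define H :: "(real^'n) \<times> ((real^'n) \<times> (real^'n)) \<Rightarrow> real"
    where "H = (\<lambda>y. (fst (snd y) - snd (snd y)) \<bullet> (fst (snd y) - snd (snd y)) + (fst y \<bullet> (snd (snd y) - \<theta>s))^2)"
  have "h = (\<lambda>s. H (\<phi> s, x s))" by (simp add: fun_eq_iff h_def w_def z_def H_def)
  moreover have "(\<lambda>s. H (\<phi> s, x s)) integrable_on {a..b}"
    by (rule int_comp[OF _ assms]) (unfold H_def, intro continuous_intros)
  ultimately show ?thesis by simp
qed

definition "Hz = (\<lambda>y::(real^'n) \<times> ((real^'n) \<times> (real^'n)). (-(\<gamma>/(1+\<mu>*(fst y \<bullet> fst y))) * (fst y \<bullet> (fst (snd y) - \<theta>s))) *\<^sub>R fst y)"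

lemma zd_fun: "zd = (\<lambda>s. Hz (\<phi> s, x s))"
  by (simp add: fun_eq_iff zd_def e_def Hz_def)

lemma Hz_cont: "continuous_on UNIV Hz"
  unfolding Hz_def by (intro continuous_intros; simp add: N_ne)

lemma nzd_int: assumes "t0 \<le> a" shows "(\<lambda>s. norm (zd s)) integrable_on {a..b}"
  unfolding zd_fun by (rule int_comp[OF _ assms, of "\<lambda>y. norm (Hz y)"]) (intro continuous_intros Hz_cont)

lemma zz_int: assumes "t0 \<le> a" shows "(\<lambda>s. (norm (zd s))^2) integrable_on {a..b}"
  unfolding zd_fun by (rule int_comp[OF _ assms, of "\<lambda>y. (norm (Hz y))^2"]) (intro continuous_intros Hz_cont)

lemma ww_int: assumes "t0 \<le> a" shows "(\<lambda>s. w s \<bullet> w s) integrable_on {a..b}"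
proof -
  have "continuous_on {a..b} w" by (rule continuous_on_subset[OF zwV_cont(2)[of b]]) (use assms in auto)
  then show ?thesis by (intro integrable_continuous_interval continuous_intros)
qed

lemma V_dec: assumes "t0 \<le> a" "a \<le> b" shows "V b \<le> V a - c * integral {a..b} h"
proof -
  have "V b - V a \<le> integral {a..b} h * (-c)"
  proof (rule has_integral_le[OF V_ftc[OF assms] has_integral_mult_left[OF integrable_integral[OF h_int[OF assms(1)]]]])
    show "Vd s \<le> h s * - c" if "s \<in> {a..b}" for s
      using Vd_le[of s] that assms t0 by (simp add: mult.commute)
  qed
  then show ?thesis by (simp add: algebra_simps)
qed

lemma V_mono: assumes "t0 \<le> a" "a \<le> b" shows "V b \<le> V a"
proof -
  have "0 \<le> integral {a..b} h" by (rule integral_nonneg[OF h_int[OF assms(1)]]) (simp add: h_nonneg)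
  then show ?thesis using V_dec[OF assms] c_pos by (smt (verit) mult_nonneg_nonneg)
qed

lemma z_inc: assumes t: "t0 \<le> t" and s: "s \<in> {t..t+T}"
  shows "norm (z s - z t) \<le> integral {t..t+T} (\<lambda>r. norm (zd r))"
proof -
  have zi: "(zd has_integral (z s - z t)) {t..s}" using z_ftc t s by auto
  have "norm (z s - z t) = norm (integral {t..s} zd)" using zi by (simp add: integral_unique)
  also have "\<dots> \<le> integral {t..s} (\<lambda>r. norm (zd r))"
    by (rule integral_norm_bound_integral[OF has_integral_integrable[OF zi] nzd_int]) (use t in auto)
  also have "\<dots> \<le> integral {t..t+T} (\<lambda>r. norm (zd r))"
    by (rule integral_subset_le) (use s t in \<open>auto intro: nzd_int\<close>)
  finally show ?thesis .
qed

end


context sol begin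

lemma step: assumes t: "t0 \<le> t" shows "(K + c*T) * V (t+T) \<le> K * V t"
proof -
  define b where "b = t + T"
  have tb: "t \<le> b" "b - t = T" using T b_def by auto
  have t0': "0 \<le> t" using t t0 by simp
  define I where "I = integral {t..b} h"
  define A where "A = integral {t..b} (\<lambda>r. norm (zd r))"
  define D where "D = T*C2*I"
  define zt2 where "zt2 = z t \<bullet> z t"
  have hi: "h integrable_on {t..b}" using h_int t by blast
  have hI: "(h has_integral I) {t..b}" unfolding I_def by (rule integrable_integral[OF hi])
  have I0: "I \<ge> 0" unfolding I_def by (rule integral_nonneg[OF hi]) (simp add: h_nonneg)
  have A0: "A \<ge> 0" unfolding A_def by (rule integral_nonneg[OF nzd_int[OF t]]) simp
  have A2: "A^2 \<le> T * integral {t..b} (\<lambda>r. (norm (zd r))^2)"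
    using CS_int[OF nzd_int[OF t] zz_int[OF t] tb(1)] tb(2) unfolding A_def by simp
  have zzI: "integral {t..b} (\<lambda>r. (norm (zd r))^2) \<le> C2 * I"
  proof (rule has_integral_le[OF integrable_integral[OF zz_int[OF t]] has_integral_mult_right[OF hI]])
    show "(norm (zd r))^2 \<le> C2 * h r" if "r \<in> {t..b}" for r
      using zd_sq[of r] that t0' by (simp add: power2_norm_eq_inner)
  qed
  have AD: "A^2 \<le> D"
  proof -
    have "T * integral {t..b} (\<lambda>r. (norm (zd r))^2) \<le> T*(C2*I)" using T by (intro mult_left_mono[OF zzI]) simp
    then show ?thesis unfolding D_def mult.assoc using A2 by linarith
  qed
  have D_bd: "(z t - z s) \<bullet> (z t - z s) \<le> D" if "s \<in> {t..b}" for s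
  proof -
    have "norm (z t - z s) \<le> A" unfolding A_def using z_inc[OF t, of s] that b_def
      by (simp add: norm_minus_commute)
    then have "(norm (z t - z s))^2 \<le> A^2" by (rule power_mono) simp
    then show ?thesis using AD by (simp add: power2_norm_eq_inner)
  qed
  have D0: "D \<ge> 0" unfolding D_def using T C2_pos I0 by simp
  have PE: "\<delta> * zt2 \<le> integral {t..t+T} (\<lambda>s. (\<phi> s \<bullet> z t)^2)"
    unfolding zt2_def by (rule pe_quad(2)[OF t0'])
  have h2: "((\<lambda>s. 2 * h s + 2*M^2*D) has_integral (2*I + 2*M^2*D*T)) {t..b}"
    using has_integral_add[OF has_integral_mult_right[OF hI, of 2] has_integral_const_real[of "2*M^2*D" t b]] tb
    by (simp add: algebra_simps)
  have PE2: "integral {t..t+T} (\<lambda>s. (\<phi> s \<bullet> z t)^2) \<le> 2*I + 2*M^2*D*T"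
  proof (rule has_integral_le[OF integrable_integral[OF pe_quad(1)[OF t0']] h2[unfolded b_def]])
    fix s assume s: "s \<in> {t..t+T}"
    then have s0: "s \<ge> 0" using t0' by simp
    have "(\<phi> s \<bullet> z t)^2 = (\<phi> s \<bullet> z s + \<phi> s \<bullet> (z t - z s))^2" by (simp add: inner_diff_right)
    also have "\<dots> \<le> 2*(\<phi> s \<bullet> z s)^2 + 2*(\<phi> s \<bullet> (z t - z s))^2" by (rule sq_split_real)
    also have "(\<phi> s \<bullet> z s)^2 \<le> h s" unfolding h_def by simp
    also have "(\<phi> s \<bullet> (z t - z s))^2 \<le> (\<phi> s \<bullet> \<phi> s) * ((z t - z s) \<bullet> (z t - z s))" by (rule Cauchy_Schwarz_ineq)
    also have "\<dots> \<le> M^2 * D" using pp_le[OF s0] D_bd[of s] s b_def by (intro mult_mono) auto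
    finally show "(\<phi> s \<bullet> z t)^2 \<le> 2 * h s + 2*M^2*D" by simp
  qed
  have Iw: "integral {t..b} (\<lambda>s. w s \<bullet> w s) \<le> I"
    unfolding I_def by (rule integral_le[OF ww_int[OF t] hi]) (simp add: h_def)
  have r2: "((\<lambda>s. (2*zt2 + 2*D) + w s \<bullet> w s) has_integral (T*(2*zt2 + 2*D) + integral {t..b} (\<lambda>s. w s \<bullet> w s))) {t..b}"
    using has_integral_add[OF has_integral_const_real[of "2*zt2 + 2*D" t b] integrable_integral[OF ww_int[OF t]]] tb
    by (simp add: algebra_simps)
  have Vb: "T * V b \<le> T*(2*zt2 + 2*D) + integral {t..b} (\<lambda>s. w s \<bullet> w s)"
  proof (rule has_integral_le[OF _ r2])
    show "((\<lambda>s. V b) has_integral T * V b) {t..b}" using has_integral_const_real[of "V b" t b] tb by simp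
    fix s assume s: "s \<in> {t..b}"
    have "V b \<le> V s" using s t by (intro V_mono) auto
    also have "\<dots> = z s \<bullet> z s + w s \<bullet> w s" by (simp add: V_def)
    also have "z s \<bullet> z s \<le> 2*(z t \<bullet> z t) + 2*((z s - z t) \<bullet> (z s - z t))" by (rule sq_split)
    also have "(z s - z t) \<bullet> (z s - z t) = (z t - z s) \<bullet> (z t - z s)" by (simp add: inner_commute inner_diff algebra_simps)
    also have "\<dots> \<le> D" by (rule D_bd[OF s])
    finally show "V b \<le> (2*zt2 + 2*D) + w s \<bullet> w s" unfolding zt2_def by simp
  qed
  have Vdec: "V b \<le> V t - c*I" unfolding I_def using V_dec[OF t tb(1)] .
  have z1: "zt2 \<le> (2*I + 2*M^2*D*T)/\<delta>" using PE PE2 \<delta> by (simp add: pos_le_divide_eq mult.commute)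
  have z2: "2*T*zt2 \<le> 2*T*((2*I + 2*M^2*D*T)/\<delta>)" using T by (intro mult_left_mono[OF z1]) simp
  have KI: "2*T*((2*I + 2*M^2*D*T)/\<delta>) + 2*T*D + I = K*I"
    unfolding K_def D_def using \<delta> by (simp add: field_simps power2_eq_square)
  have TV: "T * V b \<le> K*I" using Vb Iw z2 KI by (simp add: algebra_simps)
  have f1: "c*(T * V b) \<le> c*(K*I)" using TV c_pos by (simp add: mult_left_mono)
  have f2: "K*(c*I) \<le> K*(V t - V b)" using Vdec K_pos by (simp add: mult_left_mono)
  have "(K + c*T) * V b = K * V b + c*(T*V b)" by (simp add: algebra_simps)
  also have "\<dots> \<le> K * V b + K*(V t - V b)" using f1 f2 by (simp add: algebra_simps)
  also have "\<dots> = K * V t" by (simp add: algebra_simps)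
  finally show ?thesis unfolding b_def .
qed

end



lemma KL_exp:
  fixes kk lm :: real assumes kk: "kk > 0" and lm: "lm > 0"
  shows "classKL (\<lambda>r s. kk * r * exp (- (lm * s)))"
  unfolding classKL_def classK_def
proof (intro conjI allI impI)
  show "continuous_on ({0..} \<times> {0..}) (\<lambda>(r, s). kk * r * exp (- (lm * s)))"
    unfolding case_prod_unfold by (intro continuous_intros)
  fix s :: real assume "0 \<le> s"
  show "continuous_on {0..} (\<lambda>r. kk * r * exp (- (lm * s)))" by (intro continuous_intros)
  show "strict_mono_on {0..} (\<lambda>r. kk * r * exp (- (lm * s)))"
    by (rule strict_mono_onI) (use kk in simp)
  show "kk * 0 * exp (- (lm * s)) = 0" by simp
next
  fix r :: real assume r: "0 \<le> r"
  show "antimono_on {0..} (\<lambda>s. kk * r * exp (- (lm * s)))"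
    by (rule monotone_onI) (use kk r lm in \<open>auto intro!: mult_left_mono\<close>)
  show "((\<lambda>s. kk * r * exp (- (lm * s))) \<longlongrightarrow> 0) at_top"
    using lm by real_asymp
qed




context est begin
definition "L = ln ((K + c*T)/K)"
lemma KcT: "K + c*T > 0" using K_pos c_pos T by (intro add_pos_pos mult_pos_pos)
lemma L_pos: "L > 0"
proof -
  have "(K + c*T)/K > 1" using K_pos c_pos T by (simp add: field_simps)
  then show ?thesis unfolding L_def by (rule ln_gt_zero)
qed
lemma exp_mL: "exp (-L) = K/(K + c*T)"
proof -
  have "(K + c*T)/K > 0" using K_pos KcT by simp
  then have "exp L = (K + c*T)/K" unfolding L_def by simp
  then show ?thesis by (simp add: exp_minus)
qed
end

context sol begin

lemma V_nonneg: "V s \<ge> 0" unfolding V_def by simp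

lemma step': assumes "t0 \<le> t" shows "V (t+T) \<le> exp (-L) * V t"
proof -
  have "V (t+T) * (K + c*T) \<le> K * V t" using step[OF assms] by (simp add: mult.commute)
  then have "V (t+T) \<le> K * V t / (K + c*T)" using KcT by (simp add: pos_le_divide_eq)
  then show ?thesis unfolding exp_mL by simp
qed

lemma iter: "V (t0 + real k * T) \<le> exp (-(L * real k)) * V t0"
proof (induction k)
  case 0 then show ?case by simp
next
  case (Suc k)
  have "V (t0 + real (Suc k) * T) = V ((t0 + real k * T) + T)" by (simp add: algebra_simps)
  also have "\<dots> \<le> exp (-L) * V (t0 + real k * T)" using T by (intro step') simp
  also have "\<dots> \<le> exp (-L) * (exp (-(L * real k)) * V t0)" using Suc by (simp add: mult_left_mono)
  also have "\<dots> = exp (-(L * real (Suc k))) * V t0"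
  proof -
    have "exp (-L) * exp (-(L * real k)) = exp (-(L * real (Suc k)))"
      unfolding exp_add[symmetric] by (simp add: algebra_simps)
    then show ?thesis by (metis mult.assoc)
  qed
  finally show ?case .
qed

lemma V_bound: assumes t: "t0 \<le> t" shows "V t \<le> exp L * exp (-(L * ((t - t0)/T))) * V t0"
proof -
  define y where "y = (t - t0)/T"
  have y0: "y \<ge> 0" unfolding y_def using t T by simp
  define k where "k = nat \<lfloor>y\<rfloor>"
  have k1: "real k \<le> y" "y < real k + 1" unfolding k_def using y0 by linarith+
  have "real k * T \<le> y * T" using k1 T by (simp add: mult_right_mono)
  then have kt: "t0 + real k * T \<le> t" unfolding y_def using T by simp
  have "V t \<le> V (t0 + real k * T)" using kt T by (intro V_mono) auto
  also have "\<dots> \<le> exp (-(L * real k)) * V t0" by (rule iter)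
  also have "\<dots> \<le> exp (L - L * y) * V t0"
  proof (rule mult_right_mono)
    have "L * (y - real k) \<le> L * 1" using k1 L_pos by (intro mult_left_mono) auto
    then show "exp (-(L * real k)) \<le> exp (L - L * y)" by (simp add: algebra_simps)
  qed (rule V_nonneg)
  also have "\<dots> = exp L * exp (-(L * y)) * V t0" by (simp add: exp_diff exp_minus field_simps)
  finally show ?thesis unfolding y_def .
qed

lemma nx_eq: "(norm (x s - (\<theta>s, \<theta>s)))^2 = e s \<bullet> e s + z s \<bullet> z s"
proof -
  have "x s - (\<theta>s, \<theta>s) = (e s, z s)" by (simp add: e_def z_def prod_eq_iff)
  then show ?thesis unfolding power2_norm_eq_inner by (simp add: inner_Pair)
qed

lemma nx_V: "(norm (x s - (\<theta>s, \<theta>s)))^2 \<le> 3 * V s" "V s \<le> 3 * (norm (x s - (\<theta>s, \<theta>s)))^2"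
proof -
  have e1: "e s \<bullet> e s \<le> 2*(z s \<bullet> z s) + 2*(w s \<bullet> w s)"
    using sq_split[of "e s" "z s"] by (simp add: e_eq)
  have w1: "w s \<bullet> w s \<le> 2*(e s \<bullet> e s) + 2*(z s \<bullet> z s)"
    using sq_split[of "w s" "e s"] by (simp add: e_eq)
  have "z s \<bullet> z s \<ge> 0" "w s \<bullet> w s \<ge> 0" "e s \<bullet> e s \<ge> 0" by simp_all
  then have "e s \<bullet> e s + z s \<bullet> z s \<le> 3 * (z s \<bullet> z s + w s \<bullet> w s)" using e1 by (smt (verit))
  then show "(norm (x s - (\<theta>s, \<theta>s)))^2 \<le> 3 * V s"
    unfolding nx_eq V_def .
  show "V s \<le> 3 * (norm (x s - (\<theta>s, \<theta>s)))^2"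
    unfolding nx_eq V_def using e1 w1 \<open>z s \<bullet> z s \<ge> 0\<close> \<open>w s \<bullet> w s \<ge> 0\<close> \<open>e s \<bullet> e s \<ge> 0\<close> by (smt (verit))
qed

lemma final: assumes t: "t0 \<le> t"
  shows "norm (x t - (\<theta>s, \<theta>s)) \<le> (3 * exp (L/2)) * norm (x t0 - (\<theta>s, \<theta>s)) * exp (- ((L/(2*T)) * (t - t0)))"
proof (rule power2_le_imp_le)
  define n0 where "n0 = norm (x t0 - (\<theta>s, \<theta>s))"
  define E where "E = exp (-(L * ((t - t0)/T)))"
  have E0: "E \<ge> 0" unfolding E_def by simp
  have "(norm (x t - (\<theta>s, \<theta>s)))^2 \<le> 3 * V t" by (rule nx_V)
  also have "\<dots> \<le> 3 * (exp L * E * V t0)" using V_bound[OF t] unfolding E_def by simp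
  also have "\<dots> \<le> 3 * (exp L * E * (3 * n0^2))" unfolding n0_def using nx_V(2)[of t0] E0
    by (intro mult_left_mono) auto
  also have "\<dots> = ((3 * exp (L/2)) * n0 * exp (- ((L/(2*T)) * (t - t0))))^2"
  proof -
    have a: "exp (L/2)^2 = exp L" by (simp add: power2_eq_square exp_add[symmetric])
    have b0: "2 * (- ((L/(2*T)) * (t - t0))) = -(L * ((t - t0)/T))" using T by (simp add: field_simps)
    have b: "exp (- ((L/(2*T)) * (t - t0)))^2 = E" unfolding E_def
      by (simp only: exp_double[symmetric] b0)
    show ?thesis unfolding power_mult_distrib a b by (simp add: algebra_simps)
  qed
  finally show "(norm (x t - (\<theta>s, \<theta>s)))^2 \<le> ((3 * exp (L/2)) * norm (x t0 - (\<theta>s, \<theta>s)) * exp (- ((L/(2*T)) * (t - t0))))^2"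
    unfolding n0_def .
qed simp

end

theorem theorem2:
  fixes \<phi> :: "real \<Rightarrow> real ^ 'n" and \<theta>s :: "real ^ 'n"
    and \<beta> \<gamma> \<mu> :: real
  assumes "piecewise_continuous \<phi>"
    and "persistently_exciting \<phi>"
    and "\<beta> > 0" and "\<gamma> > 0" and "\<mu> > 0"
    and "\<beta> \<ge> 2 * \<gamma> / \<mu>"
  shows "UGAS (estimator_sys \<beta> \<gamma> \<mu> \<phi> \<theta>s) (\<theta>s, \<theta>s)"
proof -
  obtain S where S1: "\<And>b. finite (S \<inter> {0..b})" and S2: "\<And>t. t \<in> {0..} - S \<Longrightarrow> continuous (at t within {0..}) \<phi>"
    using assms(1) unfolding piecewise_continuous_def by blast
  obtain M T \<delta> where MTd: "M > 0" "T > 0" "\<delta> > 0" "\<And>t. t \<ge> 0 \<Longrightarrow> norm (\<phi> t) \<le> M"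
    "\<And>t. t \<ge> 0 \<Longrightarrow> mat_ge (integral {t..t+T} (\<lambda>s. outer (\<phi> s))) (\<delta> *\<^sub>R mat 1)"
    using assms(2) unfolding persistently_exciting_def by blast
  interpret E: est \<phi> \<theta>s \<beta> \<gamma> \<mu> M T \<delta> S
    using assms(3-6) MTd S1 S2 by unfold_locales auto
  have KL: "classKL (\<lambda>r s. (3 * exp (E.L/2)) * r * exp (- ((E.L/(2*T)) * s)))"
    by (rule KL_exp) (use E.L_pos MTd in auto)
  show ?thesis unfolding UGAS_def
  proof (intro exI conjI allI impI)
    show "classKL (\<lambda>r s. (3 * exp (E.L/2)) * r * exp (- ((E.L/(2*T)) * s)))" by (rule KL)
    fix t0 x t assume t0: "0 \<le> t0" and sx: "is_solution (estimator_sys \<beta> \<gamma> \<mu> \<phi> \<theta>s) t0 x" and t: "t0 \<le> t"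
    interpret X: sol \<phi> \<theta>s \<beta> \<gamma> \<mu> M T \<delta> S t0 x
      using t0 sx by unfold_locales auto
    show "norm (x t - (\<theta>s, \<theta>s)) \<le> (3 * exp (E.L/2)) * norm (x t0 - (\<theta>s, \<theta>s)) * exp (- ((E.L/(2*T)) * (t - t0)))"
      by (rule X.final[OF t])
  qed
qed


end
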